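(* Let $\Gamma$ be a countable bounded abelian group that does not have property $(\ast)$. Then any Hausdorff topological group $G$ in which $\Gamma$ can be embedded as a dense subgroup has a non-trivial open subgroup of finite index.
   Context: An abelian group is bounded if the orders of its elements are bounded. By Prüfer's theorem a bounded countable abelian group is a direct sum of finite cyclic groups; $m_\Gamma(p^n)\in\mathbb{N}\cup\{\infty\}$ denotes the number of summands isomorphic to $\mathbb{Z}/p^n\mathbb{Z}$ ($p$ prime, $n\ge1$). $\Gamma$ has property $(\ast)$ if for all primes $p$ and $n\ge1$, $m_\Gamma(p^n)>0$ implies there is $k\ge n$ with $m_\Gamma(p^k)=\infty$. *)

theory Defs
  imports "HOL-Analysis.Analysis" "HOL-Algebra.Algebra"
begin

definition topological_group :: "('a, 'b) monoid_scheme \<Rightarrow> 'a topology \<Rightarrow> bool" where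
  "topological_group G T \<longleftrightarrow>
     group G \<and> topspace T = carrier G \<and>
     continuous_map (prod_topology T T) T (\<lambda>(x, y). x \<otimes>\<^bsub>G\<^esub> y) \<and>
     continuous_map T T (\<lambda>x. inv\<^bsub>G\<^esub> x)"

definition bounded_group :: "('g, 'c) monoid_scheme \<Rightarrow> bool" where
  "bounded_group \<Gamma> \<longleftrightarrow>
     (\<exists>N::nat. \<forall>x\<in>carrier \<Gamma>. \<exists>n::nat. 0 < n \<and> n \<le> N \<and> x [^]\<^bsub>\<Gamma>\<^esub> n = \<one>\<^bsub>\<Gamma>\<^esub>)"

definition pruefer_decomposition :: "('g, 'c) monoid_scheme \<Rightarrow> 'g set \<Rightarrow> bool" where
  "pruefer_decomposition \<Gamma> B \<longleftrightarrow>
     B \<subseteq> carrier \<Gamma> \<and>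
     (\<forall>b\<in>B. \<exists>p n. Factorial_Ring.prime (p::nat) \<and> n \<ge> 1 \<and> group.ord \<Gamma> b = p ^ n) \<and>
     (\<forall>x\<in>carrier \<Gamma>. \<exists>!a::'g \<Rightarrow> nat.
         (\<forall>b. b \<notin> B \<longrightarrow> a b = 0) \<and> (\<forall>b\<in>B. a b < group.ord \<Gamma> b) \<and>
         finite {b. a b \<noteq> 0} \<and>
         x = finprod \<Gamma> (\<lambda>b. b [^]\<^bsub>\<Gamma>\<^esub> a b) {b. a b \<noteq> 0})"

definition summand_mult :: "('g, 'c) monoid_scheme \<Rightarrow> 'g set \<Rightarrow> nat \<Rightarrow> enat" where
  "summand_mult \<Gamma> B q =
     (let S = {b\<in>B. group.ord \<Gamma> b = q} in if finite S then enat (card S) else \<infinity>)"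

text \<open>Property (*). The multiplicities do not depend on the decomposition; we define
  (*) as: the multiplicities of every Pruefer decomposition satisfy the condition.\<close>
definition property_star :: "('g, 'c) monoid_scheme \<Rightarrow> bool" where
  "property_star \<Gamma> \<longleftrightarrow>
     (\<forall>B. pruefer_decomposition \<Gamma> B \<longrightarrow>
        (\<forall>p n. Factorial_Ring.prime (p::nat) \<and> n \<ge> 1 \<and> summand_mult \<Gamma> B (p ^ n) > 0 \<longrightarrow>
           (\<exists>k\<ge>n. summand_mult \<Gamma> B (p ^ k) = \<infinity>)))"

end

theory Submission
  imports Defs
begin


lemma tg_mult_cont:
  fixes G :: "('a, 'b) monoid_scheme" and T :: "'a topology"
  assumes "topological_group G T" "continuous_map Z T g" "continuous_map Z T h"
  shows "continuous_map Z T (\<lambda>x. g x \<otimes>\<^bsub>G\<^esub> h x)"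
proof -
  have c: "continuous_map (prod_topology T T) T (\<lambda>(x, y). x \<otimes>\<^bsub>G\<^esub> y)"
    using assms(1) unfolding topological_group_def by blast
  have "continuous_map Z T ((\<lambda>(x, y). x \<otimes>\<^bsub>G\<^esub> y) \<circ> (\<lambda>x. (g x, h x)))"
    by (rule continuous_map_compose[OF continuous_map_pairedI[OF assms(2,3)] c])
  then show ?thesis by (simp add: o_def)
qed

lemma tg_inv_cont:
  fixes G :: "('a, 'b) monoid_scheme" and T :: "'a topology"
  assumes "topological_group G T" "continuous_map Z T g"
  shows "continuous_map Z T (\<lambda>x. inv\<^bsub>G\<^esub> g x)"
proof -
  have c: "continuous_map T T (\<lambda>x. inv\<^bsub>G\<^esub> x)"
    using assms(1) unfolding topological_group_def by blast
  show ?thesis using continuous_map_compose[OF assms(2) c] by (simp add: o_def)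
qed

lemma tg_pow_cont:
  fixes G :: "('a, 'b) monoid_scheme" and T :: "'a topology"
  assumes "topological_group G T"
  shows "continuous_map T T (\<lambda>x. x [^]\<^bsub>G\<^esub> (k::nat))"
proof (induction k)
  case 0
  have "\<one>\<^bsub>G\<^esub> \<in> topspace T" using assms unfolding topological_group_def
    by (metis group.is_monoid monoid.one_closed)
  then show ?case by simp
next
  case (Suc k)
  have g: "group G" and ts: "topspace T = carrier G" using assms unfolding topological_group_def by auto
  have "continuous_map T T (\<lambda>x. x [^]\<^bsub>G\<^esub> k \<otimes>\<^bsub>G\<^esub> x)"
    by (rule tg_mult_cont[OF assms Suc continuous_map_id[unfolded id_def]])
  then show ?case
    by (rule continuous_map_eq) (simp add: ts group.is_monoid[OF g] monoid.nat_pow_Suc)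
qed

lemma tg_comm:
  fixes G :: "('a, 'b) monoid_scheme" and T :: "'a topology"
  assumes "topological_group G T" "Hausdorff_space T" "T closure_of D = topspace T"
    "D \<subseteq> carrier G" "\<And>x y. x \<in> D \<Longrightarrow> y \<in> D \<Longrightarrow> x \<otimes>\<^bsub>G\<^esub> y = y \<otimes>\<^bsub>G\<^esub> x"
  shows "comm_group G"
proof -
  have g: "group G" and ts: "topspace T = carrier G" using assms unfolding topological_group_def by auto
  let ?X = "prod_topology T T"
  have c1: "continuous_map ?X T (\<lambda>z. fst z \<otimes>\<^bsub>G\<^esub> snd z)"
    by (rule tg_mult_cont[OF assms(1)]) (simp_all add: continuous_map_fst continuous_map_snd)
  have c2: "continuous_map ?X T (\<lambda>z. snd z \<otimes>\<^bsub>G\<^esub> fst z)"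
    by (rule tg_mult_cont[OF assms(1)]) (simp_all add: continuous_map_fst continuous_map_snd)
  have cl: "closedin ?X {z \<in> topspace ?X. fst z \<otimes>\<^bsub>G\<^esub> snd z = snd z \<otimes>\<^bsub>G\<^esub> fst z}"
    by (rule closedin_continuous_maps_eq[OF assms(2) c1 c2])
  have "D \<times> D \<subseteq> {z \<in> topspace ?X. fst z \<otimes>\<^bsub>G\<^esub> snd z = snd z \<otimes>\<^bsub>G\<^esub> fst z}"
    using assms(4,5) ts by auto
  then have "?X closure_of (D \<times> D) \<subseteq> {z \<in> topspace ?X. fst z \<otimes>\<^bsub>G\<^esub> snd z = snd z \<otimes>\<^bsub>G\<^esub> fst z}"
    by (rule closure_of_minimal[OF _ cl])
  then have "\<And>x y. x \<in> carrier G \<Longrightarrow> y \<in> carrier G \<Longrightarrow> x \<otimes>\<^bsub>G\<^esub> y = y \<otimes>\<^bsub>G\<^esub> x"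
    unfolding closure_of_Times assms(3) ts by auto
  then show ?thesis using g by (simp add: group.group_comm_groupI)
qed

lemma tg_main:
  fixes G :: "('a, 'b) monoid_scheme" (structure) and T :: "'a topology"
  assumes "topological_group G T" "Hausdorff_space T" "T closure_of D = topspace T"
    "D \<subseteq> carrier G" "comm_group G" "finite R" "R \<subseteq> carrier G"
    "\<And>x. x \<in> D \<Longrightarrow> \<exists>r\<in>R. (x \<otimes>\<^bsub>G\<^esub> inv\<^bsub>G\<^esub> r) [^]\<^bsub>G\<^esub> (e::nat) = \<one>\<^bsub>G\<^esub>"
  defines "H \<equiv> {x \<in> carrier G. x [^]\<^bsub>G\<^esub> e = \<one>\<^bsub>G\<^esub>}"
  shows "subgroup H G \<and> openin T H \<and> finite (rcosets\<^bsub>G\<^esub> H)"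
proof -
  interpret comm_group G by fact
  have ts: "topspace T = carrier G" using assms unfolding topological_group_def by auto
  have sg: "subgroup H G"
    unfolding H_def
    by (rule subgroupI) (auto simp: nat_pow_distrib nat_pow_inv)
  interpret H: subgroup H G by (rule sg)
  have clH: "closedin T H"
  proof -
    have "closedin T {x \<in> topspace T. x [^]\<^bsub>G\<^esub> e \<in> {\<one>\<^bsub>G\<^esub>}}"
      by (rule closedin_continuous_map_preimage[OF tg_pow_cont[OF assms(1)]])
         (simp add: closedin_Hausdorff_singleton[OF assms(2)] ts)
    then show ?thesis unfolding H_def ts by simp
  qed
  have clc: "closedin T (H #> r)" if r: "r \<in> carrier G" for r
  proof -
    have "closedin T {x \<in> topspace T. x \<otimes> inv r \<in> H}"
      by (rule closedin_continuous_map_preimage[OF tg_mult_cont[OF assms(1) continuous_map_id[unfolded id_def]] clH])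
        (simp add: r ts)
    moreover have "H #> r = {x \<in> topspace T. x \<otimes> inv r \<in> H}"
    proof -
      have "x \<in> H #> r \<longleftrightarrow> x \<in> {x \<in> topspace T. x \<otimes> inv r \<in> H}" for x
      proof
        assume x: "x \<in> H #> r"
        then have "x \<in> carrier G" using H.elemrcos_carrier[OF is_group r] by auto
        then show "x \<in> {x \<in> topspace T. x \<otimes> inv r \<in> H}"
          using H.rcos_module[OF is_group r] x ts by auto
      next
        assume x: "x \<in> {x \<in> topspace T. x \<otimes> inv r \<in> H}"
        then show "x \<in> H #> r" using H.rcos_module[OF is_group r] ts by auto
      qed
      then show ?thesis by blast
    qed
    ultimately show ?thesis by simp
  qed
  have cov: "carrier G \<subseteq> (\<Union>r\<in>R. H #> r)"
  proof -
    have "closedin T (\<Union>r\<in>R. H #> r)"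
      by (rule closedin_Union) (use assms(6,7) clc in auto)
    moreover have "D \<subseteq> (\<Union>r\<in>R. H #> r)"
    proof
      fix x assume x: "x \<in> D"
      then obtain r where r: "r \<in> R" "(x \<otimes> inv r) [^] e = \<one>" using assms(8) by blast
      have "x \<otimes> inv r \<in> H" unfolding H_def using r x assms(4,7) by auto
      then have "x \<in> H #> r" using H.rcos_module[OF is_group] r x assms(4,7) by auto
      then show "x \<in> (\<Union>r\<in>R. H #> r)" using r by auto
    qed
    ultimately have "T closure_of D \<subseteq> (\<Union>r\<in>R. H #> r)" by (rule closure_of_minimal[rotated])
    then show ?thesis using assms(3) ts by simp
  qed
  have fin: "finite (rcosets H)"
  proof (rule finite_subset[OF _ finite_imageI[OF assms(6)]])
    show "rcosets H \<subseteq> (\<lambda>r. H #> r) ` R"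
    proof
      fix C assume "C \<in> rcosets H"
      then obtain a where a: "a \<in> carrier G" "C = H #> a" unfolding RCOSETS_def by auto
      then obtain r where r: "r \<in> R" "a \<in> H #> r" using cov by auto
      have "H #> r = H #> a" by (rule repr_independence[OF r(2)]) (use r assms(7) sg in auto)
      then show "C \<in> (\<lambda>r. H #> r) ` R" using a r by auto
    qed
  qed
  have op: "openin T H"
  proof -
    have eq: "topspace T - H = (\<Union>r\<in>{r\<in>R. r \<notin> H}. H #> r)"
    proof
      show "topspace T - H \<subseteq> (\<Union>r\<in>{r\<in>R. r \<notin> H}. H #> r)"
      proof
        fix x assume x: "x \<in> topspace T - H"
        then obtain r where r: "r \<in> R" "x \<in> H #> r" using cov ts by auto
        have "r \<notin> H"
        proof
          assume "r \<in> H"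
          then have "H #> r = H" using H.rcos_const[OF is_group] by auto
          then show False using r x by auto
        qed
        then show "x \<in> (\<Union>r\<in>{r\<in>R. r \<notin> H}. H #> r)" using r by auto
      qed
    next
      show "(\<Union>r\<in>{r\<in>R. r \<notin> H}. H #> r) \<subseteq> topspace T - H"
      proof
        fix x assume "x \<in> (\<Union>r\<in>{r\<in>R. r \<notin> H}. H #> r)"
        then obtain r where r: "r \<in> R" "r \<notin> H" "x \<in> H #> r" by auto
        have rc: "r \<in> carrier G" using r assms(7) by auto
        then have xc: "x \<in> carrier G" using r H.elemrcos_carrier[OF is_group] by auto
        have "x \<notin> H"
        proof
          assume "x \<in> H"
          then have "H #> x = H" using H.rcos_const[OF is_group] by auto
          moreover have "H #> r = H #> x" by (rule repr_independence[OF r(3) rc sg])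
          ultimately have "r \<in> H" using rcos_self[OF rc sg] by simp
          then show False using r by auto
        qed
        then show "x \<in> topspace T - H" using xc ts by auto
      qed
    qed
    have "closedin T (topspace T - H)"
      unfolding eq by (rule closedin_Union) (use assms(6,7) clc in auto)
    then show ?thesis using H.subset ts by (simp add: openin_closedin_eq)
  qed
  show ?thesis using sg op fin by auto
qed


lemma (in comm_monoid) finprod_pow_nat:
  assumes "finite A" "g \<in> A \<rightarrow> carrier G"
  shows "(finprod G g A) [^] (e::nat) = finprod G (\<lambda>i. g i [^] e) A"
  using assms
proof (induction A rule: finite_induct)
  case empty
  then show ?case by simp
next
  case (insert a A)
  then show ?case by (simp add: nat_pow_distrib Pi_def)
qed

lemma gamma_side:
  fixes \<Gamma> :: "('g, 'c) monoid_scheme" (structure)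
  assumes "comm_group \<Gamma>" "bounded_group \<Gamma>" "\<not> property_star \<Gamma>"
  shows "\<exists>(e::nat) b0. b0 \<in> carrier \<Gamma> \<and> b0 [^] e \<noteq> \<one> \<and> finite ((\<lambda>x. x [^] e) ` carrier \<Gamma>)"
proof -
  interpret comm_group \<Gamma> by fact
  have ex: "\<exists>B p n. pruefer_decomposition \<Gamma> B \<and> Factorial_Ring.prime (p::nat) \<and>
      n \<ge> 1 \<and> summand_mult \<Gamma> B (p ^ n) > 0 \<and> \<not> (\<exists>k\<ge>n. summand_mult \<Gamma> B (p ^ k) = \<infinity>)"
    using assms(3) unfolding property_star_def by simp
  then obtain B p n where pd: "pruefer_decomposition \<Gamma> B" and p: "Factorial_Ring.prime (p::nat)"
    and n: "n \<ge> 1" and pos: "summand_mult \<Gamma> B (p ^ n) > 0"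
    and fin0: "\<not> (\<exists>k\<ge>n. summand_mult \<Gamma> B (p ^ k) = \<infinity>)"
    by (elim exE conjE)
  have fin: "summand_mult \<Gamma> B (p ^ k) \<noteq> \<infinity>" if "k \<ge> n" for k
    using fin0 that by simp
  have Bsub: "B \<subseteq> carrier \<Gamma>" and Bpp: "\<And>b. b \<in> B \<Longrightarrow> \<exists>q k. Factorial_Ring.prime (q::nat) \<and> k \<ge> 1 \<and> ord b = q ^ k"
    and dec: "\<And>x. x \<in> carrier \<Gamma> \<Longrightarrow> \<exists>a::'g \<Rightarrow> nat.
         (\<forall>b. b \<notin> B \<longrightarrow> a b = 0) \<and> (\<forall>b\<in>B. a b < ord b) \<and>
         finite {b. a b \<noteq> 0} \<and>
         x = finprod \<Gamma> (\<lambda>b. b [^] a b) {b. a b \<noteq> 0}"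
    using pd unfolding pruefer_decomposition_def
    apply -
      apply (erule conjE, assumption)
     apply (erule conjE, erule conjE, erule bspec, assumption)
    apply (erule conjE, erule conjE, drule bspec, assumption, erule ex1E, blast)
    done
  have fink: "finite {b\<in>B. ord b = p ^ k}" if "k \<ge> n" for k
    using fin[OF that] unfolding summand_mult_def Let_def by (auto split: if_splits)
  obtain b0 where b0: "b0 \<in> B" "ord b0 = p ^ n"
  proof -
    have "{b\<in>B. ord b = p ^ n} \<noteq> {}"
    proof
      assume E: "{b\<in>B. ord b = p ^ n} = {}"
      have "summand_mult \<Gamma> B (p ^ n) = 0" unfolding summand_mult_def Let_def E
        by (simp add: zero_enat_def)
      then show False using pos by simp
    qed
    then show ?thesis using that by blast
  qed
  obtain N :: nat where N: "\<And>x. x \<in> carrier \<Gamma> \<Longrightarrow> \<exists>m. 0 < m \<and> m \<le> N \<and> x [^] m = \<one>"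
    using assms(2) unfolding bounded_group_def by blast
  have ordN: "ord x \<le> N" if x: "x \<in> carrier \<Gamma>" for x
  proof -
    obtain m where m: "0 < m" "m \<le> N" "x [^] m = \<one>" using N[OF x] by blast
    then have "ord x dvd m" using pow_eq_id[OF x] by simp
    then show ?thesis using m by (meson dvd_imp_le le_trans)
  qed
  define m' where "m' = (\<Prod>d\<in>{d\<in>{1..N}. \<not> p dvd d}. d)"
  define e where "e = p ^ (n - 1) * m'"
  have pm': "\<not> p dvd m'"
    unfolding m'_def by (subst prime_dvd_prod_iff[OF _ p]) auto
  have dm': "d dvd m'" if "d \<in> {1..N}" "\<not> p dvd d" for d
    unfolding m'_def by (rule dvd_prodI) (use that in auto)
  have p1: "p > 1" using p prime_gt_1_nat by blast
  define F where "F = {b\<in>B. \<not> ord b dvd e}"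
  have Fsub: "F \<subseteq> (\<Union>k\<in>{n..N}. {b\<in>B. ord b = p ^ k})"
  proof
    fix b assume bF: "b \<in> F"
    then have bB: "b \<in> B" and nd: "\<not> ord b dvd e" unfolding F_def by auto
    obtain q k where q: "Factorial_Ring.prime (q::nat)" "k \<ge> 1" "ord b = q ^ k" using Bpp[OF bB] by blast
    have le: "q ^ k \<le> N" using ordN[of b] bB Bsub q(3) by auto
    have qp: "q = p"
    proof (rule ccontr)
      assume "q \<noteq> p"
      then have "\<not> p dvd q ^ k"
        using p q(1) prime_dvd_power primes_dvd_imp_eq by blast
      moreover have "q ^ k \<ge> 1"
      proof -
        have "q > 0" using q(1) prime_gt_0_nat by blast
        then show ?thesis by (simp add: Suc_le_eq)
      qed
      ultimately have "q ^ k dvd m'" using dm' le by auto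
      then have "ord b dvd e" unfolding e_def q(3) by simp
      then show False using nd by simp
    qed
    have kn: "k \<ge> n"
    proof (rule ccontr)
      assume "\<not> k \<ge> n"
      then have "p ^ k dvd p ^ (n - 1)" by (simp add: le_imp_power_dvd)
      then have "ord b dvd e" unfolding e_def q(3) qp by simp
      then show False using nd by simp
    qed
    have "k < 2 ^ k" by (rule less_exp)
    also have "(2::nat) ^ k \<le> p ^ k" using p1 by (simp add: power_mono)
    also have "p ^ k \<le> N" using le qp by simp
    finally have "k \<le> N" by simp
    then show "b \<in> (\<Union>k\<in>{n..N}. {b\<in>B. ord b = p ^ k})" using bB q(3) qp kn by auto
  qed
  have finF: "finite F"
    by (rule finite_subset[OF Fsub]) (use fink in auto)
  have b0e: "b0 [^] e \<noteq> \<one>"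
  proof
    assume "b0 [^] e = \<one>"
    then have "p ^ n dvd p ^ (n - 1) * m'" using pow_eq_id b0 Bsub e_def by auto
    moreover have "p ^ n = p ^ (n - 1) * p" using n by (metis Suc_diff_le diff_Suc_1 power_Suc2)
    ultimately have "p dvd m'" using p1 by simp
    then show False using pm' by simp
  qed
  have img: "(\<lambda>x. x [^] e) ` carrier \<Gamma> \<subseteq>
      (\<lambda>c. finprod \<Gamma> (\<lambda>b. (b [^] c b) [^] e) F) ` (PiE F (\<lambda>_. {..<N}))"
  proof
    fix y assume "y \<in> (\<lambda>x. x [^] e) ` carrier \<Gamma>"
    then obtain x where x: "x \<in> carrier \<Gamma>" "y = x [^] e" by blast
    obtain a where a: "\<forall>b. b \<notin> B \<longrightarrow> a b = 0" "\<forall>b\<in>B. a b < ord b" "finite {b. a b \<noteq> 0}"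
      "x = finprod \<Gamma> (\<lambda>b. b [^] a b) {b. a b \<noteq> 0}" using dec[OF x(1)] by blast
    let ?S = "{b. a b \<noteq> 0}"
    have SB: "?S \<subseteq> B" using a(1) by auto
    have SC: "?S \<subseteq> carrier \<Gamma>" using SB Bsub by auto
    have FC: "F \<subseteq> carrier \<Gamma>" using Bsub F_def by auto
    have "y = finprod \<Gamma> (\<lambda>b. (b [^] a b) [^] e) ?S"
      unfolding x(2) a(4) by (rule finprod_pow_nat[OF a(3)]) (use SC in auto)
    also have "\<dots> = finprod \<Gamma> (\<lambda>b. (b [^] a b) [^] e) (?S \<union> F)"
    proof (rule finprod_mono_neutral_cong_left)
      show "finite (?S \<union> F)" using a(3) finF by simp
      show "\<And>i. i \<in> ?S \<union> F - ?S \<Longrightarrow> (i [^] a i) [^] e = \<one>"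
        using FC by auto
      show "(\<lambda>b. (b [^] a b) [^] e) \<in> ?S \<union> F \<rightarrow> carrier \<Gamma>" using SC FC by auto
    qed auto
    also have "\<dots> = finprod \<Gamma> (\<lambda>b. (b [^] a b) [^] e) F"
    proof (rule finprod_mono_neutral_cong_left[symmetric])
      show "finite (?S \<union> F)" using a(3) finF by simp
      show "\<And>i. i \<in> ?S \<union> F - F \<Longrightarrow> (i [^] a i) [^] e = \<one>"
      proof -
        fix i assume i: "i \<in> ?S \<union> F - F"
        then have iB: "i \<in> B" "ord i dvd e" using SB unfolding F_def by auto
        have ic: "i \<in> carrier \<Gamma>" using iB Bsub by auto
        have "(i [^] a i) [^] e = (i [^] e) [^] a i"
          by (simp add: ic nat_pow_pow mult.commute)
        also have "\<dots> = \<one>"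
        proof -
          have "i [^] e = \<one>" using pow_eq_id[OF ic] iB(2) by blast
          then show ?thesis by simp
        qed
        finally show "(i [^] a i) [^] e = \<one>" .
      qed
      show "(\<lambda>b. (b [^] a b) [^] e) \<in> ?S \<union> F \<rightarrow> carrier \<Gamma>" using SC FC by auto
    qed auto
    also have "\<dots> = finprod \<Gamma> (\<lambda>b. (b [^] (restrict a F) b) [^] e) F"
      by (rule finprod_cong') (use FC in auto)
    finally have yeq: "y = finprod \<Gamma> (\<lambda>b. (b [^] (restrict a F) b) [^] e) F" .
    have mem: "restrict a F \<in> PiE F (\<lambda>_. {..<N})"
    proof -
      have "a b < N" if "b \<in> F" for b
      proof -
        have bB: "b \<in> B" using that unfolding F_def by simp
        have "a b < ord b" using a(2) bB by blast
        moreover have "ord b \<le> N" using ordN Bsub bB by blast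
        ultimately show ?thesis by simp
      qed
      then show ?thesis by auto
    qed
    show "y \<in> (\<lambda>c. finprod \<Gamma> (\<lambda>b. (b [^] c b) [^] e) F) ` (PiE F (\<lambda>_. {..<N}))"
      using yeq mem by (rule image_eqI[where x="restrict a F"])
  qed
  have "finite ((\<lambda>x. x [^] e) ` carrier \<Gamma>)"
    by (rule finite_subset[OF img]) (simp add: finF finite_PiE)
  then show ?thesis using b0e b0 Bsub by blast
qed

theorem proposition2p1:
  fixes \<Gamma> :: "('g, 'c) monoid_scheme" and G :: "('a, 'b) monoid_scheme" and T :: "'a topology"
  assumes "comm_group \<Gamma>" and "countable (carrier \<Gamma>)" and "bounded_group \<Gamma>"
    and "\<not> property_star \<Gamma>"
    and "topological_group G T" and "Hausdorff_space T"
    and "f \<in> hom \<Gamma> G" and "inj_on f (carrier \<Gamma>)"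
    and "T closure_of (f ` carrier \<Gamma>) = topspace T"
  shows "\<exists>H. subgroup H G \<and> openin T H \<and> H \<noteq> carrier G \<and> finite (rcosets\<^bsub>G\<^esub> H)"
proof -
  interpret Ga: comm_group \<Gamma> by fact
  have gG: "group G" and ts: "topspace T = carrier G"
    using assms(5) unfolding topological_group_def by auto
  interpret Gg: group G by (rule gG)
  obtain e :: nat and b0 where b0: "b0 \<in> carrier \<Gamma>" "b0 [^]\<^bsub>\<Gamma>\<^esub> e \<noteq> \<one>\<^bsub>\<Gamma>\<^esub>"
    and finE: "finite ((\<lambda>x. x [^]\<^bsub>\<Gamma>\<^esub> e) ` carrier \<Gamma>)"
    using gamma_side[OF assms(1,3,4)] by blast
  define E where "E = (\<lambda>x. x [^]\<^bsub>\<Gamma>\<^esub> e) ` carrier \<Gamma>"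
  define D where "D = f ` carrier \<Gamma>"
  have fc: "\<And>x. x \<in> carrier \<Gamma> \<Longrightarrow> f x \<in> carrier G" using assms(7) by (auto simp: hom_def)
  have fm: "\<And>x y. x \<in> carrier \<Gamma> \<Longrightarrow> y \<in> carrier \<Gamma> \<Longrightarrow> f (x \<otimes>\<^bsub>\<Gamma>\<^esub> y) = f x \<otimes>\<^bsub>G\<^esub> f y"
    using assms(7) by (simp add: hom_def)
  have fp: "\<And>x. x \<in> carrier \<Gamma> \<Longrightarrow> f (x [^]\<^bsub>\<Gamma>\<^esub> e) = f x [^]\<^bsub>G\<^esub> e"
    using hom_nat_pow[OF assms(7) _ Ga.is_group gG] by blast
  have DG: "D \<subseteq> carrier G" unfolding D_def using fc by auto
  have cG: "comm_group G"
  proof (rule tg_comm[OF assms(5,6) _ DG])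
    show "T closure_of D = topspace T" using assms(9) D_def by simp
    fix x y assume "x \<in> D" "y \<in> D"
    then obtain a b where ab: "a \<in> carrier \<Gamma>" "b \<in> carrier \<Gamma>" "x = f a" "y = f b"
      unfolding D_def by auto
    then show "x \<otimes>\<^bsub>G\<^esub> y = y \<otimes>\<^bsub>G\<^esub> x" using fm Ga.m_comm by metis
  qed
  interpret cg: comm_group G by (rule cG)
  define rep where "rep c = (SOME x. x \<in> carrier \<Gamma> \<and> x [^]\<^bsub>\<Gamma>\<^esub> e = c)" for c
  have rep: "rep (a [^]\<^bsub>\<Gamma>\<^esub> e) \<in> carrier \<Gamma> \<and> rep (a [^]\<^bsub>\<Gamma>\<^esub> e) [^]\<^bsub>\<Gamma>\<^esub> e = a [^]\<^bsub>\<Gamma>\<^esub> e"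
    if a: "a \<in> carrier \<Gamma>" for a
    unfolding rep_def by (rule someI[of _ a]) (use a in simp)
  define R where "R = f ` rep ` E"
  have finR: "finite R" unfolding R_def E_def using finE by simp
  have RG: "R \<subseteq> carrier G" unfolding R_def E_def using rep fc by auto
  have cov: "\<exists>r\<in>R. (x \<otimes>\<^bsub>G\<^esub> inv\<^bsub>G\<^esub> r) [^]\<^bsub>G\<^esub> e = \<one>\<^bsub>G\<^esub>" if x: "x \<in> D" for x
  proof -
    obtain a where a: "a \<in> carrier \<Gamma>" "x = f a" using x unfolding D_def by auto
    let ?r = "rep (a [^]\<^bsub>\<Gamma>\<^esub> e)"
    have r: "?r \<in> carrier \<Gamma>" "?r [^]\<^bsub>\<Gamma>\<^esub> e = a [^]\<^bsub>\<Gamma>\<^esub> e" using rep[OF a(1)] by auto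
    have "f ?r \<in> R" unfolding R_def E_def using a(1) by auto
    moreover have "(x \<otimes>\<^bsub>G\<^esub> inv\<^bsub>G\<^esub> f ?r) [^]\<^bsub>G\<^esub> e = \<one>\<^bsub>G\<^esub>"
    proof -
      have "(x \<otimes>\<^bsub>G\<^esub> inv\<^bsub>G\<^esub> f ?r) [^]\<^bsub>G\<^esub> e
          = x [^]\<^bsub>G\<^esub> e \<otimes>\<^bsub>G\<^esub> inv\<^bsub>G\<^esub> (f ?r [^]\<^bsub>G\<^esub> e)"
        using a fc r(1) by (simp add: cg.nat_pow_distrib Gg.nat_pow_inv)
      also have "\<dots> = f (a [^]\<^bsub>\<Gamma>\<^esub> e) \<otimes>\<^bsub>G\<^esub> inv\<^bsub>G\<^esub> f (a [^]\<^bsub>\<Gamma>\<^esub> e)"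
        using fp[OF a(1)] fp[OF r(1)] r(2) a(2) by simp
      also have "\<dots> = \<one>\<^bsub>G\<^esub>" using fc a(1) by simp
      finally show ?thesis .
    qed
    ultimately show ?thesis by blast
  qed
  define H where "H = {x \<in> carrier G. x [^]\<^bsub>G\<^esub> e = \<one>\<^bsub>G\<^esub>}"
  have main: "subgroup H G \<and> openin T H \<and> finite (rcosets\<^bsub>G\<^esub> H)"
    unfolding H_def
    by (rule tg_main[OF assms(5,6) _ DG cG finR RG cov]) (use assms(9) D_def in simp_all)
  have "f b0 \<notin> H"
  proof
    assume "f b0 \<in> H"
    then have "f (b0 [^]\<^bsub>\<Gamma>\<^esub> e) = f \<one>\<^bsub>\<Gamma>\<^esub>"
      unfolding H_def using fp[OF b0(1)] hom_one[OF assms(7) Ga.is_group gG] by simp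
    then have "b0 [^]\<^bsub>\<Gamma>\<^esub> e = \<one>\<^bsub>\<Gamma>\<^esub>"
      using assms(8) b0(1) by (simp add: inj_on_def)
    then show False using b0(2) by simp
  qed
  then have "H \<noteq> carrier G" using fc[OF b0(1)] by auto
  then show ?thesis using main by blast
qed


end
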